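(* The asynchronous iteration corresponding to the synchronous block ILU fixed-point iteration $\mathbf{x}^{n+1} = \mathbf{h}(\mathbf{x}^n)$ is locally convergent, ie., if $\mathbf{x}_*$ is a fixed point of the asynchronous iteration, it is a point of attraction of the iteration.
   Context: Let $\mathbf{A}\in\mathbb{R}^{n\times n}$ be partitioned into square $b\times b$ blocks, and $S_B$ a set of block indices containing all diagonal blocks. The unknowns (entries of the block ILU factors $\mathbf{L}_{ij}$, $i>j$, and $\mathbf{U}_{ij}$, $i\le j$, for $(i,j)\in S_B$) form $\mathbf{x}\in\mathbb{R}^m$, $m=|S_B|b^2$, with $\mathbf{X}_{ij}$ the $b\times b$ block for index $(i,j)$ and $\beta_B:S_B\to\{1,\dots,m/b^2\}$ a bijective block ordering. The map $\mathbf{h}:D_B\to\mathbb{R}^m$ is given blockwise by $\mathbf{H}_{ij}(\mathbf{x})=(\mathbf{A}_{ij}-\sum_{k=1}^{j-1}\mathbf{X}_{ik}\mathbf{X}_{kj})\mathbf{X}_{jj}^{-1}$ for $i>j$ and $\mathbf{H}_{ij}(\mathbf{x})=\mathbf{A}_{ij}-\sum_{k=1}^{i-1}\mathbf{X}_{ik}\mathbf{X}_{kj}$ for $i\le j$, on $D_B:=\{\mathbf{x}: \mathbf{X}_{jj}\text{ nonsingular for all diagonal blocks}\}$. The asynchronous (block-asynchronous) iteration is $\mathbf{X}_{ij}^{k+1}=\mathbf{H}_{ij}(x_1^{k-s_1(k)},\dots,x_m^{k-s_m(k)})$ if $\beta_B(i,j)=u(k)$ and $\mathbf{X}_{ij}^{k+1}=\mathbf{X}_{ij}^k$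 otherwise, where the shifts satisfy $0\le s_i(k)\le\min\{k-1,\hat s\}$ for a fixed $\hat s\in\mathbb{N}$, and the update function $u:\mathbb{N}\to\{1,\dots,m/b^2\}$ satisfies: for every $i$ and $k$ there exists $l>k$ with $u(l)=i$. *)

theory Defs
  imports "HOL-Analysis.Analysis"
begin

(* Block size b = CARD('b); a b x b block is a "real^'b^'b".
   Block indices are 0-based: (i,j) with i,j < N (N = number of block rows).
   An unknown vector x \<in> R^m is represented blockwise as a function
   (i,j) \<mapsto> X_ij; only the blocks with (i,j) \<in> S_B are meaningful. *)

definition blk_of :: "(nat \<times> nat) set \<Rightarrow> (nat \<times> nat \<Rightarrow> real^'b^'b) \<Rightarrow> nat \<Rightarrow> nat \<Rightarrow> real^'b^'b" where
  "blk_of S x i k = (if (i, k) \<in> S then x (i, k) else 0)"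

definition bilu_H :: "(nat \<times> nat \<Rightarrow> real^'b^'b) \<Rightarrow> (nat \<times> nat) set
     \<Rightarrow> (nat \<times> nat \<Rightarrow> real^'b^'b) \<Rightarrow> nat \<times> nat \<Rightarrow> real^'b^'b" where
  "bilu_H A S x ij = (case ij of (i, j) \<Rightarrow>
     if j < i then (A (i, j) - (\<Sum>k<j. blk_of S x i k ** blk_of S x k j)) ** matrix_inv (x (j, j))
     else A (i, j) - (\<Sum>k<i. blk_of S x i k ** blk_of S x k j))"

definition in_DB :: "nat \<Rightarrow> (nat \<times> nat \<Rightarrow> real^'b^'b) \<Rightarrow> bool" where
  "in_DB N x = (\<forall>j<N. invertible (x (j, j)))"

(* the delayed argument (x_1^{k-s_1(k)}, ..., x_m^{k-s_m(k)}); one shift per scalar unknown,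
   the scalar unknown being entry (p,q) of block (i,j) *)
definition async_mix :: "(nat \<times> nat \<Rightarrow> 'b \<Rightarrow> 'b \<Rightarrow> nat \<Rightarrow> nat) \<Rightarrow> (nat \<Rightarrow> nat \<times> nat \<Rightarrow> real^'b^'b)
     \<Rightarrow> nat \<Rightarrow> nat \<times> nat \<Rightarrow> real^'b^'b" where
  "async_mix s x k = (\<lambda>ij. \<chi> p q. x (k - s ij p q k) ij $ p $ q)"

definition admissible_shifts :: "(nat \<times> nat) set \<Rightarrow> nat \<Rightarrow> (nat \<times> nat \<Rightarrow> 'b \<Rightarrow> 'b \<Rightarrow> nat \<Rightarrow> nat) \<Rightarrow> bool" where
  "admissible_shifts S shat s = (\<forall>ij\<in>S. \<forall>p q. \<forall>k\<ge>1. s ij p q k \<le> min (k - 1) shat)"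

definition admissible_update :: "(nat \<times> nat) set \<Rightarrow> (nat \<Rightarrow> nat) \<Rightarrow> bool" where
  "admissible_update S u = ((\<forall>k\<ge>1. u k \<in> {1..card S}) \<and> (\<forall>i\<in>{1..card S}. \<forall>k. \<exists>l>k. u l = i))"

(* x is a run of the block-asynchronous iteration (iteration indices k = 1,2,...; x 1 is the start) *)
definition is_async_iter :: "(nat \<times> nat \<Rightarrow> real^'b^'b) \<Rightarrow> (nat \<times> nat) set \<Rightarrow> (nat \<times> nat \<Rightarrow> nat)
     \<Rightarrow> (nat \<times> nat \<Rightarrow> 'b \<Rightarrow> 'b \<Rightarrow> nat \<Rightarrow> nat) \<Rightarrow> (nat \<Rightarrow> nat) \<Rightarrow> (nat \<Rightarrow> nat \<times> nat \<Rightarrow> real^'b^'b) \<Rightarrow> bool" where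
  "is_async_iter A S beta s u x =
     (\<forall>k\<ge>1. \<forall>ij\<in>S. x (Suc k) ij =
        (if beta ij = u k then bilu_H A S (async_mix s x k) ij else x k ij))"

end

theory Submission
  imports Defs
begin

lemma tendsto_mm:
  fixes f g :: "'a \<Rightarrow> real^'n^'n"
  assumes "(f \<longlongrightarrow> a) F" "(g \<longlongrightarrow> b) F"
  shows "((\<lambda>n. f n ** g n) \<longlongrightarrow> a ** b) F"
  unfolding matrix_matrix_mult_def
  by (intro tendsto_vec_lambda tendsto_sum tendsto_mult tendsto_vec_nth assms)

lemma tendsto_det:
  fixes f :: "'a \<Rightarrow> real^'n^'n"
  assumes "(f \<longlongrightarrow> a) F"
  shows "((\<lambda>n. det (f n)) \<longlongrightarrow> det a) F"
  unfolding det_def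
  by (intro tendsto_sum tendsto_mult tendsto_prod tendsto_const tendsto_vec_nth assms)

definition cinv :: "real^'n^'n \<Rightarrow> real^'n^'n" where
  "cinv A = (\<chi> k j. det (\<chi> i l. if l = k then (if i = j then 1 else 0) else A$i$l) / det A)"

lemma inv_formula:
  fixes A :: "real^'n^'n"
  assumes "invertible A"
  shows "matrix_inv A = cinv A"
proof -
  have AB: "A ** matrix_inv A = mat 1"
    using assms unfolding invertible_def matrix_inv_def by (rule someI2_ex) auto
  have d: "det A \<noteq> 0" using assms invertible_det_nz by blast
  have "matrix_inv A $ k $ j = cinv A $ k $ j" for k j
  proof -
    have "A *v (matrix_inv A *v axis j 1) = axis j 1"
      by (simp add: matrix_vector_mul_assoc AB)
    hence e: "matrix_inv A *v axis j 1 = (\<chi> k. det(\<chi> i l. if l=k then axis j 1 $ i else A$i$l) / det A)"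
      using cramer[OF d] by blast
    have "(matrix_inv A *v axis j 1) $ k = matrix_inv A $ k $ j"
      by (simp add: matrix_vector_mult_def axis_def if_distrib cong: if_cong)
    then have 1: "matrix_inv A $ k $ j = det(\<chi> i l. if l=k then axis j 1 $ i else A$i$l) / det A"
      using e by simp
    have 2: "(\<chi> i l. if l=k then axis j 1 $ i else A$i$l) = (\<chi> i l. if l = k then (if i = j then 1 else 0) else A$i$l)"
      by (simp add: vec_eq_iff axis_def)
    show "matrix_inv A $ k $ j = cinv A $ k $ j"
      unfolding 1 2 cinv_def by simp
  qed
  then show ?thesis by (simp add: vec_eq_iff)
qed

lemma tendsto_minv:
  fixes f :: "'a \<Rightarrow> real^'n^'n"
  assumes "(f \<longlongrightarrow> a) F" "invertible a"
  shows "((\<lambda>n. matrix_inv (f n)) \<longlongrightarrow> matrix_inv a) F"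
proof -
  have da: "det a \<noteq> 0" using assms invertible_det_nz by blast
  have ev: "eventually (\<lambda>n. det (f n) \<noteq> 0) F"
    using tendsto_imp_eventually_ne[OF tendsto_det[OF assms(1)] da] .
  have ev2: "eventually (\<lambda>n. cinv (f n) = matrix_inv (f n)) F"
    using ev by eventually_elim (simp add: inv_formula invertible_det_nz)
  have c: "((\<lambda>n. cinv (f n)) \<longlongrightarrow> cinv a) F"
    unfolding cinv_def
  proof (intro tendsto_vec_lambda tendsto_divide tendsto_det[OF assms(1)] da tendsto_det)
    fix k j i l
    show "((\<lambda>n. if l = k then (if i = j then 1 else 0) else f n $ i $ l) \<longlongrightarrow>
            (if l = k then (if i = j then 1 else 0) else a $ i $ l)) F"
      by (cases "l = k") (auto intro!: tendsto_vec_nth assms(1))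
  qed
  show ?thesis
    using Lim_transform_eventually[OF c ev2] inv_formula[OF assms(2)] by simp
qed

definition near :: "real \<Rightarrow> real^'b^'b \<Rightarrow> real^'b^'b \<Rightarrow> bool" where
  "near r M M' = (\<forall>p q. \<bar>M$p$q - M'$p$q\<bar> < r)"

definition lev :: "nat \<times> nat \<Rightarrow> nat" where
  "lev ab = (case ab of (a, b) \<Rightarrow> 2 * min a b + (if b < a then 1 else 0))"

lemma tendsto_blk:
  assumes "\<forall>ab\<in>S. ((\<lambda>n. y n ab) \<longlongrightarrow> xs ab) F"
  shows "((\<lambda>n. blk_of S (y n) i k) \<longlongrightarrow> blk_of S xs i k) F"
  using assms by (cases "(i,k) \<in> S") (auto simp: blk_of_def)

lemma tendsto_H:
  fixes y :: "'a \<Rightarrow> nat \<times> nat \<Rightarrow> real^'b^'b"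
  assumes "\<forall>ab\<in>S. ((\<lambda>n. y n ab) \<longlongrightarrow> xs ab) F" "(i,j)\<in>S"
    "j<i \<longrightarrow> (j,j)\<in>S \<and> invertible (xs (j,j))"
  shows "((\<lambda>n. bilu_H A S (y n) (i,j)) \<longlongrightarrow> bilu_H A S xs (i,j)) F"
proof (cases "j < i")
  case True
  then have "((\<lambda>n. matrix_inv (y n (j,j))) \<longlongrightarrow> matrix_inv (xs (j,j))) F"
    using assms by (intro tendsto_minv) auto
  then show ?thesis using True
    unfolding bilu_H_def
    by (auto intro!: tendsto_mm tendsto_diff tendsto_sum tendsto_blk assms(1))
next
  case False
  then show ?thesis
    unfolding bilu_H_def
    by (auto intro!: tendsto_mm tendsto_diff tendsto_sum tendsto_blk assms(1))
qed

lemma seq_delta: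
  fixes xs :: "nat \<times> nat \<Rightarrow> real^'b^'b"
  assumes "\<And>y. \<forall>ab\<in>S. (\<lambda>n. y n ab) \<longlonglongrightarrow> xs ab \<Longrightarrow> eventually (\<lambda>n. P (y n)) sequentially"
  shows "\<exists>\<delta>>0. \<forall>z. (\<forall>ab\<in>S. near \<delta> (z ab) (xs ab)) \<longrightarrow> P z"
proof (rule ccontr)
  assume "\<not> ?thesis"
  then have "\<forall>n. \<exists>z. (\<forall>ab\<in>S. near (1 / real (Suc n)) (z ab) (xs ab)) \<and> \<not> P z"
    by (metis divide_pos_pos of_nat_0_less_iff zero_less_Suc zero_less_one)
  then obtain y where y: "\<And>n. (\<forall>ab\<in>S. near (1 / real (Suc n)) (y n ab) (xs ab)) \<and> \<not> P (y n)"
    by metis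
  have "\<forall>ab\<in>S. (\<lambda>n. y n ab) \<longlonglongrightarrow> xs ab"
  proof
    fix ab assume ab: "ab \<in> S"
    show "(\<lambda>n. y n ab) \<longlonglongrightarrow> xs ab"
    proof (intro vec_tendstoI)
      fix p q
      have "(\<lambda>n. y n ab $ p $ q - xs ab $ p $ q) \<longlonglongrightarrow> 0"
      proof (rule Lim_null_comparison)
        show "\<forall>\<^sub>F n in sequentially. norm (y n ab $ p $ q - xs ab $ p $ q) \<le> inverse (real (Suc n))"
          using y ab by (auto simp: near_def less_imp_le divide_inverse intro!: always_eventually)
        show "(\<lambda>n. inverse (real (Suc n))) \<longlonglongrightarrow> 0" by (rule LIMSEQ_inverse_real_of_nat)
      qed
      then show "(\<lambda>n. y n ab $ p $ q) \<longlonglongrightarrow> xs ab $ p $ q" by (rule LIM_zero_cancel)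
    qed
  qed
  from assms[OF this] obtain n where "P (y n)" by (metis eventually_sequentially order_refl)
  with y show False by blast
qed

lemma H_local:
  assumes "j<i \<Longrightarrow> (j,j)\<in>S" "\<forall>ab\<in>S. lev ab < lev (i,j) \<longrightarrow> x ab = y ab"
  shows "bilu_H A S x (i,j) = bilu_H A S y (i,j)"
proof -
  have b1: "blk_of S x i k = blk_of S y i k" if "k < min i j" for k
    using assms(2) that by (auto simp: blk_of_def lev_def)
  have b2: "blk_of S x k j = blk_of S y k j" if "k < min i j" for k
    using assms(2) that by (auto simp: blk_of_def lev_def)
  show ?thesis
  proof (cases "j < i")
    case True
    then have "x (j,j) = y (j,j)" using assms by (auto simp: lev_def)
    moreover have "(\<Sum>k<j. blk_of S x i k ** blk_of S x k j) = (\<Sum>k<j. blk_of S y i k ** blk_of S y k j)"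
      using b1 b2 True by (intro sum.cong) auto
    ultimately show ?thesis using True by (simp add: bilu_H_def)
  next
    case False
    have "(\<Sum>k<i. blk_of S x i k ** blk_of S x k j) = (\<Sum>k<i. blk_of S y i k ** blk_of S y k j)"
      using b1 b2 False by (intro sum.cong) auto
    then show ?thesis using False by (simp add: bilu_H_def)
  qed
qed

theorem theorem6:
  fixes A :: "nat \<times> nat \<Rightarrow> real^'b^'b" and N :: nat and S :: "(nat \<times> nat) set"
    and beta :: "nat \<times> nat \<Rightarrow> nat" and xs :: "nat \<times> nat \<Rightarrow> real^'b^'b" and shat :: nat
  assumes "S \<subseteq> {..<N} \<times> {..<N}"
    and "\<forall>j<N. (j, j) \<in> S"
    and "bij_betw beta S {1..card S}"
    and "in_DB N xs"
    and "\<forall>ij\<in>S. bilu_H A S xs ij = xs ij"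
  shows "\<exists>\<delta>>0. \<forall>s u x. admissible_shifts S shat s \<longrightarrow> admissible_update S u
           \<longrightarrow> is_async_iter A S beta s u x
           \<longrightarrow> (\<forall>ij\<in>S. dist (x 1 ij) (xs ij) < \<delta>)
           \<longrightarrow> (\<forall>k\<ge>1. in_DB N (async_mix s x k)) \<and> (\<forall>ij\<in>S. (\<lambda>k. x k ij) \<longlonglongrightarrow> xs ij)"
proof -
  note SN = assms(1) and diag = assms(2) and bij = assms(3) and fixp = assms(5)
  have finS: "finite S" using SN finite_subset by blast
  have inS: "ab \<in> S \<Longrightarrow> fst ab < N \<and> snd ab < N" for ab using SN by auto
  have invxs: "\<forall>j<N. invertible (xs (j,j))" using assms(4) by (simp add: in_DB_def)
  have jj: "j<i \<longrightarrow> (j,j)\<in>S \<and> invertible (xs (j,j))" if "(i,j) \<in> S" for i j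
    using inS[OF that] diag invxs by auto
  define M where "M = 2 * N"
  have levM: "lev ab < M" if "ab \<in> S" for ab
    using inS[OF that] unfolding M_def lev_def by (cases ab) auto
  have cont: "\<exists>\<delta>>0. \<forall>z. (\<forall>ab\<in>S. near \<delta> (z ab) (xs ab)) \<longrightarrow> (\<forall>ij\<in>S. near \<epsilon> (bilu_H A S z ij) (xs ij))"
    if eps: "\<epsilon> > 0" for \<epsilon>
  proof (rule seq_delta)
    fix y :: "nat \<Rightarrow> nat \<times> nat \<Rightarrow> real^'b^'b"
    assume y: "\<forall>ab\<in>S. (\<lambda>n. y n ab) \<longlonglongrightarrow> xs ab"
    show "\<forall>\<^sub>F n in sequentially. \<forall>ij\<in>S. near \<epsilon> (bilu_H A S (y n) ij) (xs ij)"
    proof (rule eventually_ball_finite[OF finS], rule ballI)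
      fix ij assume ij: "ij \<in> S"
      obtain i j where ij': "ij = (i,j)" by fastforce
      have t: "(\<lambda>n. bilu_H A S (y n) ij) \<longlonglongrightarrow> xs ij"
        using tendsto_H[OF y, of i j A] ij jj[of i j] fixp ij' by auto
      show "\<forall>\<^sub>F n in sequentially. near \<epsilon> (bilu_H A S (y n) ij) (xs ij)"
        unfolding near_def
      proof (intro eventually_all_finite)
        fix p q
        have "(\<lambda>n. bilu_H A S (y n) ij $ p $ q) \<longlonglongrightarrow> xs ij $ p $ q"
          by (intro tendsto_vec_nth t)
        from tendstoD[OF this eps]
        show "\<forall>\<^sub>F n in sequentially. \<bar>bilu_H A S (y n) ij $ p $ q - xs ij $ p $ q\<bar> < \<epsilon>"
          by (simp add: dist_real_def)
      qed
    qed
  qed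
  have "\<exists>\<rho>>0. \<forall>z. (\<forall>ab\<in>S. near \<rho> (z ab) (xs ab)) \<longrightarrow> in_DB N z"
  proof (rule seq_delta)
    fix y :: "nat \<Rightarrow> nat \<times> nat \<Rightarrow> real^'b^'b"
    assume y: "\<forall>ab\<in>S. (\<lambda>n. y n ab) \<longlonglongrightarrow> xs ab"
    have "\<forall>\<^sub>F n in sequentially. \<forall>j\<in>{..<N}. invertible (y n (j,j))"
    proof (rule eventually_ball_finite, simp, rule ballI)
      fix j assume j: "j \<in> {..<N}"
      have "(\<lambda>n. det (y n (j,j))) \<longlonglongrightarrow> det (xs (j,j))"
        using y diag j by (intro tendsto_det) auto
      moreover have "det (xs (j,j)) \<noteq> 0" using invxs j invertible_det_nz by auto
      ultimately show "\<forall>\<^sub>F n in sequentially. invertible (y n (j,j))"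
        using tendsto_imp_eventually_ne invertible_det_nz by (metis (mono_tags, lifting) eventually_mono)
    qed
    then show "\<forall>\<^sub>F n in sequentially. in_DB N (y n)"
      by (rule eventually_mono) (simp add: in_DB_def)
  qed
  then obtain \<rho> where rho: "\<rho> > 0" "\<forall>z. (\<forall>ab\<in>S. near \<rho> (z ab) (xs ab)) \<longrightarrow> in_DB N z"
    by blast
  obtain dfun where dfun: "\<And>\<epsilon>. \<epsilon> > 0 \<Longrightarrow> dfun \<epsilon> > 0 \<and> (\<forall>z. (\<forall>ab\<in>S. near (dfun \<epsilon>) (z ab) (xs ab)) \<longrightarrow> (\<forall>ij\<in>S. near \<epsilon> (bilu_H A S z ij) (xs ij)))"
    using cont by metis
  define g where "g = rec_nat \<rho> (\<lambda>_ r. min r (dfun r))"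
  have g0: "g 0 = \<rho>" and gS: "g (Suc k) = min (g k) (dfun (g k))" for k by (simp_all add: g_def)
  have gpos: "g k > 0" for k
    by (induction k) (use rho dfun in \<open>auto simp: g0 gS\<close>)
  have gdec: "decseq g" by (rule decseq_SucI) (simp add: gS)
  define r where "r L = g (M - L)" for L
  have rmono: "r L \<le> r L'" if "L \<le> L'" for L L'
    unfolding r_def using that by (intro decseqD[OF gdec]) auto
  have rpos: "r L > 0" for L unfolding r_def by (rule gpos)
  have rle: "r L \<le> \<rho>" for L unfolding r_def g0[symmetric] by (intro decseqD[OF gdec]) auto
  have rstep: "r L' \<le> dfun (r L)" if "L' < L" "L < M" for L L'
  proof -
    have "r L' \<le> r (L - 1)" using that by (intro rmono) auto
    also have "r (L - 1) = g (Suc (M - L))" unfolding r_def using that by (simp add: Suc_diff_le)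
    also have "\<dots> \<le> dfun (r L)" unfolding gS r_def by simp
    finally show ?thesis .
  qed
  show ?thesis
  proof (rule exI[of _ "g M"], rule conjI[OF gpos], intro allI impI)
    fix s u x
    assume adm_s: "admissible_shifts S shat s" and adm_u: "admissible_update S u"
      and it: "is_async_iter A S beta s u x" and init: "\<forall>ij\<in>S. dist (x 1 ij) (xs ij) < g M"
    have mix: "async_mix s x k ab $ p $ q = x (k - s ab p q k) ab $ p $ q" for k ab p q
      by (simp add: async_mix_def)
    have sb: "s ab p q k \<le> k - 1 \<and> s ab p q k \<le> shat" if "ab \<in> S" "1 \<le> k" for ab p q k
      using adm_s that unfolding admissible_shifts_def by auto
    have itk: "x (Suc k) ij = (if beta ij = u k then bilu_H A S (async_mix s x k) ij else x k ij)"
      if "1 \<le> k" "ij \<in> S" for k ij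
      using it that unfolding is_async_iter_def by blast
    define P where "P k = (\<forall>ab\<in>S. near (r (lev ab)) (x k ab) (xs ab))" for k
    have P1: "P 1"
      unfolding P_def near_def
    proof (intro ballI allI)
      fix ab p q assume ab: "ab \<in> S"
      have "\<bar>x 1 ab $ p $ q - xs ab $ p $ q\<bar> = dist (x 1 ab $ p $ q) (xs ab $ p $ q)"
        by (simp add: dist_real_def)
      also have "\<dots> \<le> dist (x 1 ab $ p) (xs ab $ p)" by (rule dist_vec_nth_le)
      also have "\<dots> \<le> dist (x 1 ab) (xs ab)" by (rule dist_vec_nth_le)
      also have "\<dots> < g M" using init ab by blast
      also have "g M = r 0" by (simp add: r_def)
      also have "\<dots> \<le> r (lev ab)" by (rule rmono) simp
      finally show "\<bar>x 1 ab $ p $ q - xs ab $ p $ q\<bar> < r (lev ab)" .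
    qed
    have mixnear: "\<bar>async_mix s x k ab $ p $ q - xs ab $ p $ q\<bar> < r (lev ab)"
      if "1 \<le> k" "ab \<in> S" "\<forall>k'. 1 \<le> k' \<and> k' \<le> k \<longrightarrow> P k'" for k ab p q
    proof -
      have "P (k - s ab p q k)" using that sb[OF that(2,1), of p q] by auto
      then show ?thesis using that(2) unfolding mix P_def near_def by blast
    qed
    have step: "P (Suc k)" if k1: "1 \<le> k" and IH: "\<forall>k'. 1 \<le> k' \<and> k' \<le> k \<longrightarrow> P k'" for k
      unfolding P_def
    proof
      fix ij assume ij: "ij \<in> S"
      obtain i j where ij': "ij = (i,j)" by fastforce
      show "near (r (lev ij)) (x (Suc k) ij) (xs ij)"
      proof (cases "beta ij = u k")
        case False
        then show ?thesis using itk[OF k1 ij] IH k1 ij unfolding P_def by auto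
      next
        case True
        define L where "L = lev ij"
        define z where "z ab = (if ab \<in> S \<and> lev ab < L then async_mix s x k ab else xs ab)" for ab
        have "bilu_H A S (async_mix s x k) (i,j) = bilu_H A S z (i,j)"
          using jj[of i j] ij ij' by (intro H_local) (auto simp: z_def L_def)
        moreover have "\<forall>ab\<in>S. near (dfun (r L)) (z ab) (xs ab)"
        proof
          fix ab assume ab: "ab \<in> S"
          show "near (dfun (r L)) (z ab) (xs ab)"
          proof (cases "lev ab < L")
            case True
            have "r (lev ab) \<le> dfun (r L)" using True levM[OF ij] by (intro rstep) (auto simp: L_def)
            then show ?thesis using mixnear[OF k1 ab IH] True ab unfolding z_def near_def
              by (auto intro: less_le_trans)
          next
            case False
            then show ?thesis using dfun[OF rpos[of L]] unfolding z_def near_def by auto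
          qed
        qed
        ultimately have "near (r L) (bilu_H A S (async_mix s x k) ij) (xs ij)"
          using dfun[OF rpos[of L]] ij ij' by auto
        then show ?thesis using itk[OF k1 ij] True by (simp add: L_def)
      qed
    qed
    have allP: "\<forall>k'. 1 \<le> k' \<and> k' \<le> k \<longrightarrow> P k'" for k
    proof (induction k)
      case 0 then show ?case by simp
    next
      case (Suc k)
      show ?case
      proof (intro allI impI)
        fix k' assume k': "1 \<le> k' \<and> k' \<le> Suc k"
        show "P k'"
        proof (cases "k' \<le> k")
          case True then show ?thesis using Suc k' by blast
        next
          case False
          then have "k' = Suc k" using k' by simp
          then show ?thesis using P1 step[of k] Suc by (cases "k = 0") auto
        qed
      qed
    qed
    have part1: "\<forall>k\<ge>1. in_DB N (async_mix s x k)"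
    proof (intro allI impI)
      fix k :: nat assume k1: "1 \<le> k"
      have "\<forall>ab\<in>S. near \<rho> (async_mix s x k ab) (xs ab)"
        unfolding near_def using mixnear[OF k1 _ allP] rle by (meson less_le_trans)
      then show "in_DB N (async_mix s x k)" using rho by blast
    qed
    have key: "x (Suc k) ij = xs ij"
      if k1: "1 \<le> k" and kT: "T + shat \<le> k" and HT: "\<forall>k'\<ge>T. \<forall>ab\<in>S. lev ab < L \<longrightarrow> x k' ab = xs ab"
        and ij: "ij \<in> S" and lij: "lev ij \<le> L" and up: "beta ij = u k" for k T L ij
    proof -
      obtain i j where ij': "ij = (i,j)" by fastforce
      have "async_mix s x k ab = xs ab" if ab: "ab \<in> S" "lev ab < L" for ab
      proof -
        have "x (k - s ab p q k) ab = xs ab" for p q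
          using HT sb[OF ab(1) k1, of p q] kT ab by auto
        then show ?thesis by (simp add: vec_eq_iff mix)
      qed
      then have "bilu_H A S (async_mix s x k) (i,j) = bilu_H A S xs (i,j)"
        using jj[of i j] ij ij' lij by (intro H_local) auto
      then show ?thesis using itk[OF k1 ij] up fixp ij ij' by simp
    qed
    have ev: "eventually (\<lambda>k. \<forall>ab\<in>S. lev ab < L \<longrightarrow> x k ab = xs ab) sequentially" for L
    proof (induction L)
      case 0 then show ?case by simp
    next
      case (Suc L)
      then obtain T where T: "\<forall>k'\<ge>T. \<forall>ab\<in>S. lev ab < L \<longrightarrow> x k' ab = xs ab"
        unfolding eventually_sequentially by blast
      show ?case
      proof (rule eventually_ball_finite[OF finS], rule ballI)
        fix ab assume ab: "ab \<in> S"
        show "\<forall>\<^sub>F k in sequentially. lev ab < Suc L \<longrightarrow> x k ab = xs ab"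
        proof (cases "lev ab = L")
          case False
          have "\<forall>n\<ge>T. lev ab < Suc L \<longrightarrow> x n ab = xs ab"
          proof (intro allI impI)
            fix n assume "n \<ge> T" "lev ab < Suc L"
            then have "lev ab < L" using False by simp
            then show "x n ab = xs ab" using T ab \<open>n \<ge> T\<close> by blast
          qed
          then show ?thesis unfolding eventually_sequentially by blast
        next
          case True
          have "beta ab \<in> {1..card S}" using bij_betw_apply[OF bij ab] .
          moreover have "\<forall>i\<in>{1..card S}. \<forall>k. \<exists>l>k. u l = i"
            using adm_u unfolding admissible_update_def by (rule conjunct2)
          ultimately have "\<forall>k. \<exists>l>k. u l = beta ab" by simp
          then obtain l where l: "l > T + shat" "u l = beta ab" by blast
          have "x k ab = xs ab" if "Suc l \<le> k" for k
            using that
          proof (induction k rule: dec_induct)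
            case base
            show ?case by (rule key[OF _ _ T ab]) (use l True in auto)
          next
            case (step n)
            show ?case
            proof (cases "beta ab = u n")
              case True
              show ?thesis by (rule key[OF _ _ T ab]) (use True step(1) l \<open>lev ab = L\<close> in auto)
            next
              case False
              have "1 \<le> n" using step(1) by simp
              then show ?thesis using itk[OF _ ab, of n] step(3) False by simp
            qed
          qed
          then show ?thesis unfolding eventually_sequentially by blast
        qed
      qed
    qed
    have part2: "\<forall>ij\<in>S. (\<lambda>k. x k ij) \<longlonglongrightarrow> xs ij"
    proof
      fix ij assume ij: "ij \<in> S"
      have "eventually (\<lambda>k. x k ij = xs ij) sequentially"
        using ev[of M] ij levM[OF ij] by (auto elim: eventually_mono)
      then show "(\<lambda>k. x k ij) \<longlonglongrightarrow> xs ij" by (rule tendsto_eventually)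
    qed
    show "(\<forall>k\<ge>1. in_DB N (async_mix s x k)) \<and> (\<forall>ij\<in>S. (\<lambda>k. x k ij) \<longlonglongrightarrow> xs ij)"
      using part1 part2 by blast
  qed
qed

end
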